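(* Let $\alpha\in(0,2)$ and let $(\varepsilon_t)_{t\in\mathbb{Z}}$ be i.i.d. with $\varepsilon_t\sim S_\alpha(1/\sqrt2,0,0)$. Let $X_{t,T}=\sum_{j=0}^\infty a_{t,T}(j)\varepsilon_{t-j}$ with real coefficients satisfying $\sum_{j\ge0}|a_{t,T}(j)|^{\min\{1,\alpha\}}<\infty$ for all $t$ (an AR regular solution of an $\alpha$-stable tvARMA system). Let $h\ge1$, $T'=T-h-1$, and $l\in\{1,\dots,h\}$. Among predictors of $X_{T'+l,T}$ of the form $\hat X_{T'}(l)=\sum_{j=0}^\infty A(T',T'-j)\varepsilon_{T'-j}$ with real coefficients $A(T',T'-j)$ (such that the series converges), the dispersion of the prediction error $e_{T'}(l)=X_{T'+l,T}-\hat X_{T'}(l)$ is minimized by the predictor $$\hat X_{T'}(l)=\sum_{j=0}^{\infty}a_{T'+l,T}(j+l)\,\varepsilon_{T'-j}.$$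
   Context: $S_\alpha(\sigma,0,0)$ denotes the symmetric $\alpha$-stable law with characteristic function $\exp\{-\sigma^\alpha|\theta|^\alpha\}$. The dispersion of a symmetric $\alpha$-stable random variable with scale parameter $\sigma$ is $\sigma^\alpha$; the prediction error above is a symmetric $\alpha$-stable random variable. *)

theory Defs
  imports "HOL-Probability.Probability"
begin

text \<open>Y is a symmetric alpha-stable random variable with dispersion d, i.e.
  Y ~ S_alpha(sigma,0,0) with sigma^alpha = d: its characteristic function
  is exp(-d |theta|^alpha).\<close>
definition sas_disp :: "'a measure \<Rightarrow> real \<Rightarrow> real \<Rightarrow> ('a \<Rightarrow> real) \<Rightarrow> bool" where
  "sas_disp M \<alpha> d Y \<longleftrightarrow> Y \<in> borel_measurable M \<and> 0 \<le> d \<and>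
     (\<forall>\<theta>::real. char (distr M borel Y) \<theta> = complex_of_real (exp (- d * \<bar>\<theta>\<bar> powr \<alpha>)))"

end

theory Submission
  imports Defs
begin

context prob_space
begin

lemma indep_vars_reindex:
  assumes "indep_vars M' X I" "inj_on g J" "g ` J \<subseteq> I"
  shows "indep_vars (\<lambda>j. M' (g j)) (\<lambda>j. X (g j)) J"
proof -
  from assms(1) have rv: "\<forall>i\<in>I. random_variable (M' i) (X i)" and
    ind: "indep_sets (\<lambda>i. {X i -` A \<inter> space M | A. A \<in> sets (M' i)}) I"
    by (auto simp: indep_vars_def2)
  show ?thesis unfolding indep_vars_def2
  proof (intro conjI ballI)
    fix j assume "j \<in> J" then show "random_variable (M' (g j)) (X (g j))" using rv assms(3) by auto
  next
    show "indep_sets (\<lambda>j. {X (g j) -` A \<inter> space M | A. A \<in> sets (M' (g j))}) J"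
      unfolding indep_sets_def
    proof (intro conjI ballI allI impI)
      fix j assume "j \<in> J" then show "{X (g j) -` A \<inter> space M | A. A \<in> sets (M' (g j))} \<subseteq> events"
        using ind assms(3) unfolding indep_sets_def by auto
    next
      fix K A assume K: "K \<subseteq> J" "K \<noteq> {}" "finite K"
        and A: "A \<in> Pi K (\<lambda>j. {X (g j) -` A \<inter> space M | A. A \<in> sets (M' (g j))})"
      define A' where "A' i = A (the_inv_into K g i)" for i
      have inj: "inj_on g K" using assms(2) K(1) inj_on_subset by blast
      have A'g: "A' (g j) = A j" if "j \<in> K" for j using that inj by (simp add: A'_def the_inv_into_f_f)
      have A'P: "A' \<in> Pi (g`K) (\<lambda>i. {X i -` A \<inter> space M | A. A \<in> sets (M' i)})"
      proof
        fix i assume "i \<in> g`K"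
        then obtain j where j: "j \<in> K" "i = g j" by blast
        then have "A j \<in> {X (g j) -` A \<inter> space M | A. A \<in> sets (M' (g j))}" using A by blast
        then show "A' i \<in> {X i -` A \<inter> space M | A. A \<in> sets (M' i)}" using j A'g by simp
      qed
      have "prob (\<Inter>i\<in>g`K. A' i) = (\<Prod>i\<in>g`K. prob (A' i))"
      proof -
        have "g`K \<subseteq> I" "g`K \<noteq> {}" "finite (g`K)" using K assms(3) by auto
        with ind A'P show ?thesis unfolding indep_sets_def by (elim conjE) (drule spec[of _ "g`K"], simp)
      qed
      moreover have "(\<Inter>i\<in>g`K. A' i) = (\<Inter>j\<in>K. A j)" using A'g by auto
      moreover have "(\<Prod>i\<in>g`K. prob (A' i)) = (\<Prod>j\<in>K. prob (A j))"
        using A'g by (simp add: prod.reindex[OF inj])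
      ultimately show "prob (\<Inter>j\<in>K. A j) = (\<Prod>j\<in>K. prob (A j))" by simp
    qed
  qed
qed

lemma char_distr_scale:
  assumes [measurable]: "X \<in> borel_measurable M"
  shows "char (distr M borel (\<lambda>\<omega>. c * X \<omega>)) t = char (distr M borel X) (c * t)"
  by (simp add: char_def integral_distr mult.assoc mult.commute mult.left_commute)

lemma sas_lincomb:
  fixes Z :: "nat \<Rightarrow> 'a \<Rightarrow> real"
  assumes ind: "indep_vars (\<lambda>_. borel) Z UNIV" and sas: "\<And>j. sas_disp M \<alpha> c (Z j)" and F: "finite F"
  shows "sas_disp M \<alpha> (c * (\<Sum>j\<in>F. \<bar>b j\<bar> powr \<alpha>)) (\<lambda>\<omega>. \<Sum>j\<in>F. b j * Z j \<omega>)"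
proof -
  have [measurable]: "Z j \<in> borel_measurable M" for j using sas[of j] by (simp add: sas_disp_def)
  have c0: "0 \<le> c" using sas[of 0] by (simp add: sas_disp_def)
  have iv: "indep_vars (\<lambda>_. borel) (\<lambda>j \<omega>. b j * Z j \<omega>) F"
    by (rule indep_vars_compose2[OF indep_vars_subset[OF ind], where Y="\<lambda>j x. b j * x"]) auto
  have "char (distr M borel (\<lambda>\<omega>. \<Sum>j\<in>F. b j * Z j \<omega>)) t =
      complex_of_real (exp (- (c * (\<Sum>j\<in>F. \<bar>b j\<bar> powr \<alpha>)) * \<bar>t\<bar> powr \<alpha>))" for t
  proof -
    have "char (distr M borel (\<lambda>\<omega>. \<Sum>j\<in>F. b j * Z j \<omega>)) t = (\<Prod>j\<in>F. char (distr M borel (\<lambda>\<omega>. b j * Z j \<omega>)) t)"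
      by (rule char_distr_sum[OF iv])
    also have "\<dots> = (\<Prod>j\<in>F. complex_of_real (exp (- c * \<bar>b j * t\<bar> powr \<alpha>)))"
      using sas by (simp add: char_distr_scale sas_disp_def)
    also have "\<dots> = complex_of_real (exp (\<Sum>j\<in>F. - c * \<bar>b j * t\<bar> powr \<alpha>))"
      using F by (simp add: exp_sum)
    also have "(\<Sum>j\<in>F. - c * \<bar>b j * t\<bar> powr \<alpha>) = - (c * (\<Sum>j\<in>F. \<bar>b j\<bar> powr \<alpha>)) * \<bar>t\<bar> powr \<alpha>"
      by (simp add: abs_mult powr_mult sum_distrib_left sum_distrib_right algebra_simps sum_negf)
    finally show ?thesis .
  qed
  moreover have "0 \<le> c * (\<Sum>j\<in>F. \<bar>b j\<bar> powr \<alpha>)" using c0 by (simp add: sum_nonneg)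
  ultimately show ?thesis unfolding sas_disp_def by simp
qed

lemma sas_distr_eq:
  assumes Y: "sas_disp M \<alpha> d Y" and Z: "sas_disp M \<alpha> c Z" and c: "0 < c" and a: "0 < \<alpha>"
  shows "distr M borel Y = distr M borel (\<lambda>\<omega>. (d / c) powr (1/\<alpha>) * Z \<omega>)"
proof -
  have [measurable]: "Y \<in> borel_measurable M" "Z \<in> borel_measurable M" and d: "0 \<le> d"
    using Y Z by (auto simp: sas_disp_def)
  have "char (distr M borel Y) = char (distr M borel (\<lambda>\<omega>. (d / c) powr (1/\<alpha>) * Z \<omega>))"
  proof
    fix t
    have e: "((d / c) powr (1/\<alpha>)) powr \<alpha> = d / c" using a c d by (simp add: powr_powr)
    have "\<bar>(d / c) powr (1/\<alpha>) * t\<bar> powr \<alpha> = (d / c) * \<bar>t\<bar> powr \<alpha>"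
      using e by (simp add: abs_mult powr_mult)
    then show "char (distr M borel Y) t = char (distr M borel (\<lambda>\<omega>. (d / c) powr (1/\<alpha>) * Z \<omega>)) t"
      using Y Z c by (simp add: char_distr_scale sas_disp_def)
  qed
  then show ?thesis by (intro Levy_uniqueness) auto
qed

end

context prob_space
begin

lemma sas_small_tail:
  assumes Z: "sas_disp M \<alpha> c Z" and c: "0 < c" and a: "0 < \<alpha>" and t: "0 < t" and eta: "0 < \<eta>"
  shows "\<exists>\<delta>>0. \<forall>d Y. sas_disp M \<alpha> d Y \<and> d \<le> \<delta> \<longrightarrow> prob {\<omega>\<in>space M. t \<le> \<bar>Y \<omega>\<bar>} \<le> \<eta>"
proof -
  have [measurable]: "Z \<in> borel_measurable M" using Z by (simp add: sas_disp_def)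
  define R where "R n = {\<omega>\<in>space M. real n \<le> \<bar>Z \<omega>\<bar>}" for n :: nat
  have "(\<lambda>n. prob (R n)) \<longlonglongrightarrow> prob (\<Inter>n. R n)"
    by (rule finite_Lim_measure_decseq) (auto simp: R_def decseq_def)
  moreover have "(\<Inter>n. R n) = {}"
  proof -
    have "\<omega> \<notin> R (nat \<lceil>\<bar>Z \<omega>\<bar>\<rceil> + 1)" for \<omega>
      by (simp add: R_def) linarith
    then show ?thesis by blast
  qed
  ultimately have "(\<lambda>n. prob (R n)) \<longlonglongrightarrow> 0" by simp
  then have "eventually (\<lambda>n. prob (R n) < \<eta>) sequentially"
    using eta by (rule order_tendstoD)
  then obtain N where N: "N \<ge> 1" "prob (R N) < \<eta>"
    by (metis eventually_at_top_linorder nat_le_linear)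
  define r where "r = real N"
  have r: "0 < r" using N by (simp add: r_def)
  define \<delta> where "\<delta> = c * (t / r) powr \<alpha>"
  have \<delta>: "0 < \<delta>" using c t r by (simp add: \<delta>_def)
  show ?thesis
  proof (intro exI[of _ \<delta>] conjI allI impI \<delta>)
    fix d Y assume dY: "sas_disp M \<alpha> d Y \<and> d \<le> \<delta>"
    then have Y: "sas_disp M \<alpha> d Y" and dd: "d \<le> \<delta>" by auto
    have [measurable]: "Y \<in> borel_measurable M" and d0: "0 \<le> d" using Y by (auto simp: sas_disp_def)
    define s where "s = (d / c) powr (1/\<alpha>)"
    have s0: "0 \<le> s" by (simp add: s_def)
    have "s \<le> ((t / r) powr \<alpha>) powr (1/\<alpha>)"
      unfolding s_def using dd c d0 a by (intro powr_mono2) (auto simp: \<delta>_def field_simps)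
    also have "\<dots> = t / r" using a t r by (simp add: powr_powr)
    finally have st: "s \<le> t / r" .
    have "prob {\<omega>\<in>space M. t \<le> \<bar>Y \<omega>\<bar>} = measure (distr M borel Y) {x. t \<le> \<bar>x\<bar>}"
      by (subst measure_distr) (auto intro!: arg_cong[where f=prob])
    also have "\<dots> = measure (distr M borel (\<lambda>\<omega>. s * Z \<omega>)) {x. t \<le> \<bar>x\<bar>}"
      unfolding s_def using sas_distr_eq[OF Y Z c a] by simp
    also have "\<dots> = prob {\<omega>\<in>space M. t \<le> \<bar>s * Z \<omega>\<bar>}"
      by (subst measure_distr) (auto intro!: arg_cong[where f=prob])
    also have "\<dots> \<le> prob (R N)"
    proof (rule finite_measure_mono)
      show "R N \<in> events" by (simp add: R_def)
      show "{\<omega> \<in> space M. t \<le> \<bar>s * Z \<omega>\<bar>} \<subseteq> R N"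
      proof safe
        fix \<omega> assume \<omega>: "\<omega> \<in> space M" "t \<le> \<bar>s * Z \<omega>\<bar>"
        have "t \<le> s * \<bar>Z \<omega>\<bar>" using \<omega> s0 by (simp add: abs_mult)
        also have "\<dots> \<le> t / r * \<bar>Z \<omega>\<bar>" using st by (intro mult_right_mono) auto
        finally have "r \<le> \<bar>Z \<omega>\<bar>" using t r by (simp add: field_simps)
        then show "\<omega> \<in> R N" using \<omega> by (simp add: R_def r_def)
      qed
    qed
    also have "\<dots> \<le> \<eta>" using N by simp
    finally show "prob {\<omega>\<in>space M. t \<le> \<bar>Y \<omega>\<bar>} \<le> \<eta>" .
  qed
qed

lemma maximal_ineq:
  fixes Y :: "nat \<Rightarrow> 'a \<Rightarrow> real"
  assumes ind: "indep_vars (\<lambda>_. borel) Y UNIV" and mn: "m \<le> n" and t: "0 \<le> t"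
    and hyp: "\<And>k. m \<le> k \<Longrightarrow> k \<le> n \<Longrightarrow> prob {\<omega>\<in>space M. t \<le> \<bar>\<Sum>j\<in>{k..<n}. Y j \<omega>\<bar>} \<le> \<delta>"
  shows "prob {\<omega>\<in>space M. \<exists>k\<in>{m..n}. 3*t \<le> \<bar>\<Sum>j\<in>{m..<k}. Y j \<omega>\<bar>}
           \<le> prob {\<omega>\<in>space M. t \<le> \<bar>\<Sum>j\<in>{m..<n}. Y j \<omega>\<bar>} + \<delta>"
proof -
  have rv[measurable]: "\<And>j. Y j \<in> borel_measurable M" using ind by (auto simp: indep_vars_def)
  define S where "S a b \<omega> = (\<Sum>j\<in>{a..<b}. Y j \<omega>)" for a b \<omega>
  have S_meas[measurable]: "S a b \<in> borel_measurable M" for a b unfolding S_def by measurable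
  define B where "B k = {\<omega>\<in>space M. 3*t \<le> \<bar>S m k \<omega>\<bar> \<and> (\<forall>i\<in>{m..<k}. \<bar>S m i \<omega>\<bar> < 3*t)}" for k
  define C where "C k = {\<omega>\<in>space M. t \<le> \<bar>S k n \<omega>\<bar>}" for k
  have Bm[measurable]: "B k \<in> sets M" for k unfolding B_def by measurable
  have Cm[measurable]: "C k \<in> sets M" for k unfolding C_def by measurable
  have indep: "prob (B k \<inter> C k) = prob (B k) * prob (C k)" if "m \<le> k" "k \<le> n" for k
  proof -
    have iv: "indep_var (PiM {m..<k} (\<lambda>_. borel)) (\<lambda>\<omega>. restrict (\<lambda>i. Y i \<omega>) {m..<k})
                (PiM {k..<n} (\<lambda>_. borel)) (\<lambda>\<omega>. restrict (\<lambda>i. Y i \<omega>) {k..<n})"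
      by (rule indep_var_restrict[OF ind]) auto
    define g1 where "g1 f = (3*t \<le> \<bar>\<Sum>j\<in>{m..<k}. f j\<bar> \<and>
        (\<forall>i\<in>{m..<k}. \<bar>\<Sum>j\<in>{m..<i}. f j\<bar> < 3*t))" for f :: "nat \<Rightarrow> real"
    define g2 where "g2 f = (t \<le> \<bar>\<Sum>j\<in>{k..<n}. f j\<bar>)" for f :: "nat \<Rightarrow> real"
    have sm: "(\<lambda>f. \<Sum>j\<in>J. (f j :: real)) \<in> borel_measurable (PiM I (\<lambda>_. borel))" if "J \<subseteq> I" for J I :: "nat set"
    proof -
      have c: "(\<lambda>f. f i) \<in> borel_measurable (PiM I (\<lambda>_. borel))" if "i \<in> J" for i
        using measurable_component_singleton[of i I "\<lambda>_. borel"] that \<open>J \<subseteq> I\<close> by auto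
      from borel_measurable_sum[of J "\<lambda>j f. f j", OF c] show ?thesis by simp
    qed
    have sp: "Measurable.pred (PiM I (\<lambda>_. borel)) (\<lambda>f. P (\<Sum>j\<in>J. (f j :: real)))"
      if "J \<subseteq> I" "Measurable.pred borel (P :: real \<Rightarrow> bool)" for J I :: "nat set" and P
      using measurable_compose[OF sm[OF that(1)] that(2)] by simp
    have g1m: "g1 \<in> measurable (PiM {m..<k} (\<lambda>_. borel)) (count_space UNIV)"
    proof -
      have p1: "Measurable.pred (PiM {m..<k} (\<lambda>_. borel)) (\<lambda>f. 3*t \<le> \<bar>\<Sum>j\<in>{m..<k}. f j\<bar>)"
        by (rule sp) auto
      have p2: "Measurable.pred (PiM {m..<k} (\<lambda>_. borel)) (\<lambda>f. \<forall>i\<in>{m..<k}. \<bar>\<Sum>j\<in>{m..<i}. f j\<bar> < 3*t)"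
      proof (rule pred_intros_finite(3))
        fix i assume i: "i \<in> {m..<k}"
        then show "Measurable.pred (PiM {m..<k} (\<lambda>_. borel)) (\<lambda>f. \<bar>\<Sum>j\<in>{m..<i}. f j\<bar> < 3*t)"
          by (intro sp) auto
      qed simp
      have "Measurable.pred (PiM {m..<k} (\<lambda>_. borel)) (\<lambda>f. (3*t \<le> \<bar>\<Sum>j\<in>{m..<k}. f j\<bar>) \<and>
        (\<forall>i\<in>{m..<k}. \<bar>\<Sum>j\<in>{m..<i}. f j\<bar> < 3*t))"
        using p1 p2 by (rule pred_intros_logic)
      then show ?thesis unfolding g1_def by simp
    qed
    have g2m: "g2 \<in> measurable (PiM {k..<n} (\<lambda>_. borel)) (count_space UNIV)"
      unfolding g2_def by (rule sp) auto
    have e1: "g1 (restrict (\<lambda>i. Y i \<omega>) {m..<k}) = (3*t \<le> \<bar>S m k \<omega>\<bar> \<and> (\<forall>i\<in>{m..<k}. \<bar>S m i \<omega>\<bar> < 3*t))" for \<omega>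
    proof -
      have "(\<Sum>j\<in>{m..<k}. restrict (\<lambda>i. Y i \<omega>) {m..<k} j) = S m k \<omega>" by (simp add: S_def)
      moreover have "(\<Sum>j\<in>{m..<i}. restrict (\<lambda>i. Y i \<omega>) {m..<k} j) = S m i \<omega>"
        if "i \<in> {m..<k}" for i
        unfolding S_def using that by (intro sum.cong) auto
      ultimately show ?thesis unfolding g1_def by simp
    qed
    have e2: "g2 (restrict (\<lambda>i. Y i \<omega>) {k..<n}) = (t \<le> \<bar>S k n \<omega>\<bar>)" for \<omega>
      by (simp add: g2_def S_def)
    have "prob ((\<lambda>x. ((g1 \<circ> (\<lambda>\<omega>. restrict (\<lambda>i. Y i \<omega>) {m..<k})) x, (g2 \<circ> (\<lambda>\<omega>. restrict (\<lambda>i. Y i \<omega>) {k..<n})) x)) -` ({True} \<times> {True}) \<inter> space M)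
      = prob ((g1 \<circ> (\<lambda>\<omega>. restrict (\<lambda>i. Y i \<omega>) {m..<k})) -` {True} \<inter> space M) *
        prob ((g2 \<circ> (\<lambda>\<omega>. restrict (\<lambda>i. Y i \<omega>) {k..<n})) -` {True} \<inter> space M)"
      by (rule indep_varD[OF indep_var_compose[OF iv g1m g2m]]) auto
    moreover have "(\<lambda>x. ((g1 \<circ> (\<lambda>\<omega>. restrict (\<lambda>i. Y i \<omega>) {m..<k})) x, (g2 \<circ> (\<lambda>\<omega>. restrict (\<lambda>i. Y i \<omega>) {k..<n})) x)) -` ({True} \<times> {True}) \<inter> space M = B k \<inter> C k"
      unfolding B_def C_def by (rule set_eqI) (simp add: e1 e2, blast)
    moreover have "(g1 \<circ> (\<lambda>\<omega>. restrict (\<lambda>i. Y i \<omega>) {m..<k})) -` {True} \<inter> space M = B k"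
      unfolding B_def by (rule set_eqI) (simp add: e1, blast)
    moreover have "(g2 \<circ> (\<lambda>\<omega>. restrict (\<lambda>i. Y i \<omega>) {k..<n})) -` {True} \<inter> space M = C k"
      unfolding C_def by (rule set_eqI) (simp add: e2, blast)
    ultimately show ?thesis by simp
  qed
  have cover: "{\<omega>\<in>space M. \<exists>k\<in>{m..n}. 3*t \<le> \<bar>S m k \<omega>\<bar>}
      \<subseteq> {\<omega>\<in>space M. t \<le> \<bar>S m n \<omega>\<bar>} \<union> (\<Union>k\<in>{m..n}. B k \<inter> C k)"
  proof safe
    fix \<omega> k assume \<omega>: "\<omega> \<in> space M" "k \<in> {m..n}" "3*t \<le> \<bar>S m k \<omega>\<bar>"
      and nb: "\<omega> \<notin> (\<Union>k\<in>{m..n}. B k \<inter> C k)"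
    define k0 where "k0 = (LEAST k. k \<in> {m..n} \<and> 3*t \<le> \<bar>S m k \<omega>\<bar>)"
    have k0: "k0 \<in> {m..n} \<and> 3*t \<le> \<bar>S m k0 \<omega>\<bar>" unfolding k0_def
      by (rule LeastI[of _ k]) (use \<omega> in auto)
    have k0min: "\<bar>S m i \<omega>\<bar> < 3*t" if "i \<in> {m..<k0}" for i
    proof (rule ccontr)
      assume "\<not> \<bar>S m i \<omega>\<bar> < 3*t"
      then have "k0 \<le> i" unfolding k0_def using that k0 by (intro Least_le) auto
      then show False using that by auto
    qed
    have "\<omega> \<in> B k0" using k0 k0min \<omega> by (auto simp: B_def)
    then have "\<omega> \<notin> C k0" using nb k0 by blast
    then have "\<bar>S k0 n \<omega>\<bar> < t" using \<omega> by (auto simp: C_def)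
    moreover have "S m n \<omega> = S m k0 \<omega> + S k0 n \<omega>"
      using k0 unfolding S_def by (simp add: sum.atLeastLessThan_concat)
    ultimately show "t \<le> \<bar>S m n \<omega>\<bar>" using k0 t by linarith
  qed
  have disj: "disjoint_family_on B {m..n}"
    unfolding disjoint_family_on_def
  proof safe
    fix k k' \<omega> assume kk: "k \<in> {m..n}" "k' \<in> {m..n}" "k \<noteq> k'" "\<omega> \<in> B k" "\<omega> \<in> B k'"
    show "\<omega> \<in> {}"
    proof (cases "k < k'")
      case True
      then have "k \<in> {m..<k'}" using kk by auto
      then show ?thesis using kk unfolding B_def by fastforce
    next
      case False then have "k' \<in> {m..<k}" using kk by auto
      then show ?thesis using kk unfolding B_def by fastforce
    qed
  qed
  have "prob {\<omega>\<in>space M. \<exists>k\<in>{m..n}. 3*t \<le> \<bar>S m k \<omega>\<bar>}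
      \<le> prob ({\<omega>\<in>space M. t \<le> \<bar>S m n \<omega>\<bar>} \<union> (\<Union>k\<in>{m..n}. B k \<inter> C k))"
    by (rule finite_measure_mono[OF cover]) measurable
  also have "\<dots> \<le> prob {\<omega>\<in>space M. t \<le> \<bar>S m n \<omega>\<bar>} + prob (\<Union>k\<in>{m..n}. B k \<inter> C k)"
    by (rule measure_Un_le) measurable
  also have "prob (\<Union>k\<in>{m..n}. B k \<inter> C k) \<le> (\<Sum>k\<in>{m..n}. prob (B k \<inter> C k))"
    by (rule finite_measure_subadditive_finite) auto
  also have "\<dots> = (\<Sum>k\<in>{m..n}. prob (B k) * prob (C k))" by (intro sum.cong) (auto simp: indep)
  also have "\<dots> \<le> (\<Sum>k\<in>{m..n}. prob (B k) * \<delta>)"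
    by (intro sum_mono mult_left_mono) (auto simp: C_def S_def intro!: hyp)
  also have "\<dots> = prob (\<Union>k\<in>{m..n}. B k) * \<delta>"
    using finite_measure_finite_Union[of "{m..n}" B] disj by (simp add: sum_distrib_right image_subset_iff)
  also have "\<dots> \<le> 1 * \<delta>"
  proof (rule mult_right_mono)
    have "prob {\<omega> \<in> space M. t \<le> \<bar>\<Sum>j = n..<n. Y j \<omega>\<bar>} \<le> \<delta>" using hyp[of n] mn by simp
    then show "0 \<le> \<delta>" using measure_nonneg[of M] by (meson order_trans)
  qed simp
  finally show ?thesis by (simp add: S_def)
qed

end

lemma tail_bound:
  fixes b :: "nat \<Rightarrow> real"
  assumes "summable (\<lambda>j. \<bar>b j\<bar> powr \<alpha>)"
  shows "(\<Sum>j\<in>{k..<n}. \<bar>b j\<bar> powr \<alpha>) \<le> (\<Sum>j. \<bar>b (j + k)\<bar> powr \<alpha>)"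
proof (cases "k \<le> n")
  case True
  have s: "summable (\<lambda>j. \<bar>b (j + k)\<bar> powr \<alpha>)" using assms by (subst summable_iff_shift) 
  have "(\<Sum>j\<in>{k..<n}. \<bar>b j\<bar> powr \<alpha>) = (\<Sum>j\<in>{0+k..<(n-k)+k}. \<bar>b j\<bar> powr \<alpha>)" using True by simp
  also have "\<dots> = (\<Sum>j\<in>{0..<n-k}. \<bar>b (j+k)\<bar> powr \<alpha>)" by (rule sum.shift_bounds_nat_ivl)
  also have "\<dots> \<le> (\<Sum>j. \<bar>b (j + k)\<bar> powr \<alpha>)"
    using s by (intro sum_le_suminf) auto
  finally show ?thesis .
next
  case False
  have s: "summable (\<lambda>j. \<bar>b (j + k)\<bar> powr \<alpha>)" using assms by (subst summable_iff_shift)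
  have "0 \<le> (\<Sum>j. \<bar>b (j + k)\<bar> powr \<alpha>)" using s by (intro suminf_nonneg) auto
  then show ?thesis using False by simp
qed

context prob_space
begin

lemma sas_series_Cauchy_event:
  fixes Z :: "nat \<Rightarrow> 'a \<Rightarrow> real"
  assumes ind: "indep_vars (\<lambda>_. borel) Z UNIV" and sas: "\<And>j. sas_disp M \<alpha> c (Z j)"
    and c: "0 < c" and a: "0 < \<alpha>" and sb: "summable (\<lambda>j. \<bar>b j\<bar> powr \<alpha>)" and t: "0 < t"
  shows "AE \<omega> in M. \<exists>m. \<forall>k\<ge>m. \<bar>\<Sum>j\<in>{m..<k}. b j * Z j \<omega>\<bar> < 3 * t"
proof -
  define Y where "Y j \<omega> = b j * Z j \<omega>" for j \<omega>
  have [measurable]: "Z j \<in> borel_measurable M" for j using sas[of j] by (simp add: sas_disp_def)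
  have Ym[measurable]: "Y j \<in> borel_measurable M" for j unfolding Y_def by measurable
  have indY: "indep_vars (\<lambda>_. borel) Y UNIV"
    unfolding Y_def by (rule indep_vars_compose2[OF ind, where Y="\<lambda>j x. b j * x"]) auto
  have sasD: "sas_disp M \<alpha> (c * (\<Sum>j\<in>{k..<n}. \<bar>b j\<bar> powr \<alpha>)) (\<lambda>\<omega>. \<Sum>j\<in>{k..<n}. Y j \<omega>)" for k n
    unfolding Y_def by (rule sas_lincomb[OF ind sas]) simp
  define E where "E = {\<omega>\<in>space M. \<forall>m. \<exists>k\<ge>m. 3 * t \<le> \<bar>\<Sum>j\<in>{m..<k}. Y j \<omega>\<bar>}"
  have Em[measurable]: "E \<in> sets M" unfolding E_def by measurable
  have small: "prob E \<le> \<eta>" if eta: "0 < \<eta>" for \<eta>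
  proof -
    obtain \<delta> where \<delta>: "0 < \<delta>" and
      dl: "\<And>d Y. sas_disp M \<alpha> d Y \<and> d \<le> \<delta> \<Longrightarrow> prob {\<omega>\<in>space M. t \<le> \<bar>Y \<omega>\<bar>} \<le> \<eta> / 2"
      using sas_small_tail[OF sas[of 0] c a t, of "\<eta>/2"] eta by auto
    have "(\<lambda>k. c * (\<Sum>j. \<bar>b (j + k)\<bar> powr \<alpha>)) \<longlonglongrightarrow> c * 0"
      by (intro tendsto_mult tendsto_const suminf_exist_split2 sb)
    then have "eventually (\<lambda>k. c * (\<Sum>j. \<bar>b (j + k)\<bar> powr \<alpha>) < \<delta>) sequentially"
      using \<delta> by (intro order_tendstoD) auto
    then obtain m where m: "c * (\<Sum>j. \<bar>b (j + m)\<bar> powr \<alpha>) < \<delta>"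
      by (auto simp: eventually_sequentially)
    have dsmall: "c * (\<Sum>j\<in>{k..<n}. \<bar>b j\<bar> powr \<alpha>) \<le> \<delta>" if "m \<le> k" for k n
    proof -
      have "(\<Sum>j\<in>{k..<n}. \<bar>b j\<bar> powr \<alpha>) \<le> (\<Sum>j\<in>{m..<n}. \<bar>b j\<bar> powr \<alpha>)"
        using that by (intro sum_mono2) auto
      also have "\<dots> \<le> (\<Sum>j. \<bar>b (j + m)\<bar> powr \<alpha>)" by (rule tail_bound[OF sb])
      finally have "c * (\<Sum>j\<in>{k..<n}. \<bar>b j\<bar> powr \<alpha>) \<le> c * (\<Sum>j. \<bar>b (j + m)\<bar> powr \<alpha>)"
        using c by (intro mult_left_mono) auto
      then show ?thesis using m by linarith
    qed
    have pt: "prob {\<omega>\<in>space M. t \<le> \<bar>\<Sum>j\<in>{k..<n}. Y j \<omega>\<bar>} \<le> \<eta> / 2" if "m \<le> k" for k n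
      using dl[OF conjI[OF sasD dsmall[OF that]]] .
    define U where "U n = {\<omega>\<in>space M. \<exists>k\<in>{m..n+m}. 3*t \<le> \<bar>\<Sum>j\<in>{m..<k}. Y j \<omega>\<bar>}" for n
    have Um[measurable]: "U n \<in> sets M" for n unfolding U_def by measurable
    have Ub: "prob (U n) \<le> \<eta>" for n
    proof -
      have "prob (U n) \<le> prob {\<omega>\<in>space M. t \<le> \<bar>\<Sum>j\<in>{m..<n+m}. Y j \<omega>\<bar>} + \<eta> / 2"
        unfolding U_def by (rule maximal_ineq[OF indY]) (use t pt in auto)
      also have "\<dots> \<le> \<eta>/2 + \<eta>/2" using pt[of m "n+m"] by simp
      finally show ?thesis by simp
    qed
    have "(\<lambda>n. prob (U n)) \<longlonglongrightarrow> prob (\<Union>n. U n)"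
      by (rule finite_Lim_measure_incseq) (auto simp: U_def incseq_def)
    then have "prob (\<Union>n. U n) \<le> \<eta>" using Ub by (intro LIMSEQ_le_const2) auto
    moreover have "E \<subseteq> (\<Union>n. U n)"
    proof
      fix \<omega> assume "\<omega> \<in> E"
      then obtain k where k: "k \<ge> m" "3 * t \<le> \<bar>\<Sum>j\<in>{m..<k}. Y j \<omega>\<bar>" "\<omega> \<in> space M"
        unfolding E_def by blast
      then have "\<omega> \<in> U (k - m)" unfolding U_def by auto
      then show "\<omega> \<in> (\<Union>n. U n)" by blast
    qed
    then have "prob E \<le> prob (\<Union>n. U n)" by (intro finite_measure_mono) auto
    ultimately show ?thesis by simp
  qed
  have "prob E = 0"
  proof (rule ccontr)
    assume "prob E \<noteq> 0"
    moreover have "0 \<le> prob E" by (rule measure_nonneg)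
    ultimately have "0 < prob E" by linarith
    then show False using small[of "prob E / 2"] by simp
  qed
  then have e0: "emeasure M E = 0" by (simp add: emeasure_eq_measure)
  have eqE: "{\<omega>\<in>space M. \<not> (\<exists>m. \<forall>k\<ge>m. \<bar>\<Sum>j\<in>{m..<k}. Y j \<omega>\<bar> < 3 * t)} = E"
    unfolding E_def by (simp add: not_less)
  have "AE \<omega> in M. \<exists>m. \<forall>k\<ge>m. \<bar>\<Sum>j\<in>{m..<k}. Y j \<omega>\<bar> < 3 * t"
    by (subst AE_iff_measurable[OF Em eqE]) (rule e0)
  then show ?thesis by (simp add: Y_def)
qed

lemma sas_series_AE:
  fixes Z :: "nat \<Rightarrow> 'a \<Rightarrow> real"
  assumes ind: "indep_vars (\<lambda>_. borel) Z UNIV" and sas: "\<And>j. sas_disp M \<alpha> c (Z j)"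
    and c: "0 < c" and a: "0 < \<alpha>" and sb: "summable (\<lambda>j. \<bar>b j\<bar> powr \<alpha>)"
  shows "AE \<omega> in M. summable (\<lambda>j. b j * Z j \<omega>)"
proof -
  have "AE \<omega> in M. \<forall>r::nat. \<exists>m. \<forall>k\<ge>m. \<bar>\<Sum>j\<in>{m..<k}. b j * Z j \<omega>\<bar> < 3 * (1 / (real r + 1))"
    unfolding AE_all_countable
    by (intro allI sas_series_Cauchy_event[OF ind sas c a sb]) simp
  then show ?thesis
  proof (rule AE_mp, intro AE_I2 impI)
    fix \<omega> assume H: "\<forall>r::nat. \<exists>m. \<forall>k\<ge>m. \<bar>\<Sum>j\<in>{m..<k}. b j * Z j \<omega>\<bar> < 3 * (1 / (real r + 1))"
    define P where "P n = (\<Sum>j<n. b j * Z j \<omega>)" for n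
    have PS: "P k - P m = (\<Sum>j\<in>{m..<k}. b j * Z j \<omega>)" if "m \<le> k" for m k
    proof -
      have "P k = (\<Sum>j\<in>{0..<m}. b j * Z j \<omega>) + (\<Sum>j\<in>{m..<k}. b j * Z j \<omega>)"
        unfolding P_def lessThan_atLeast0 using that by (intro sum.atLeastLessThan_concat[symmetric]) auto
      then show ?thesis by (simp add: P_def lessThan_atLeast0)
    qed
    have "Cauchy P"
    proof (rule CauchyI)
      fix e :: real assume e: "0 < e"
      obtain r :: nat where r: "6 / e < real r" using reals_Archimedean2 by blast
      obtain m where m: "\<And>k. k \<ge> m \<Longrightarrow> \<bar>\<Sum>j\<in>{m..<k}. b j * Z j \<omega>\<bar> < 3 * (1 / (real r + 1))"
        using H by blast
      have r6: "6 * (1 / (real r + 1)) < e" using r e by (simp add: field_simps)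
      show "\<exists>M. \<forall>m'\<ge>M. \<forall>n\<ge>M. norm (P m' - P n) < e"
      proof (intro exI[of _ m] allI impI)
        fix m' n assume "m \<le> m'" "m \<le> n"
        then have "\<bar>P m' - P m\<bar> < 3 * (1 / (real r + 1))" "\<bar>P n - P m\<bar> < 3 * (1 / (real r + 1))"
          using m PS by auto
        then show "norm (P m' - P n) < e" using r6 by simp
      qed
    qed
    then show "summable (\<lambda>j. b j * Z j \<omega>)"
      unfolding summable_iff_convergent Cauchy_convergent_iff[symmetric] P_def .
  qed
qed

end

lemma powr_min_summable:
  fixes x :: "nat \<Rightarrow> real"
  assumes s: "summable (\<lambda>j. \<bar>x j\<bar> powr min 1 \<alpha>)" and a: "0 < \<alpha>"
  shows "summable (\<lambda>j. \<bar>x j\<bar> powr \<alpha>)"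
proof (cases "\<alpha> \<le> 1")
  case True then show ?thesis using s by (simp add: min_def)
next
  case False
  then have s1: "summable (\<lambda>j. \<bar>x j\<bar>)" using s by (simp add: min_def)
  then have "(\<lambda>j. \<bar>x j\<bar>) \<longlonglongrightarrow> 0" by (rule summable_LIMSEQ_zero)
  then have "eventually (\<lambda>j. \<bar>x j\<bar> < 1) sequentially" by (intro order_tendstoD) auto
  then have "eventually (\<lambda>j. norm (\<bar>x j\<bar> powr \<alpha>) \<le> \<bar>x j\<bar>) sequentially"
  proof (rule eventually_mono)
    fix j assume "\<bar>x j\<bar> < 1"
    then have "\<bar>x j\<bar> powr \<alpha> \<le> \<bar>x j\<bar> powr 1" using False by (intro powr_mono') auto
    then show "norm (\<bar>x j\<bar> powr \<alpha>) \<le> \<bar>x j\<bar>" by simp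
  qed
  then show ?thesis using s1 by (rule summable_comparison_test_ev)
qed

context prob_space
begin

lemma char_distr_int:
  assumes [measurable]: "f \<in> borel_measurable M"
  shows "char (distr M borel f) t = (CLINT \<omega>|M. iexp (t * f \<omega>))"
  by (simp add: char_def integral_distr)

lemma pred_error:
  fixes Z :: "nat \<Rightarrow> 'a \<Rightarrow> real" and a A :: "nat \<Rightarrow> real"
  assumes ind: "indep_vars (\<lambda>_. borel) Z UNIV" and sas: "\<And>j. sas_disp M \<alpha> c (Z j)"
    and c: "0 < c" and al: "0 < \<alpha>" and sa: "summable (\<lambda>j. \<bar>a j\<bar> powr \<alpha>)"
    and AEA: "AE \<omega> in M. summable (\<lambda>j. A j * Z (j + l) \<omega>)"
  shows "summable (\<lambda>k. \<bar>if k < l then a k else a k - A (k - l)\<bar> powr \<alpha>) \<and>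
     sas_disp M \<alpha> (c * (\<Sum>k. \<bar>if k < l then a k else a k - A (k - l)\<bar> powr \<alpha>))
        (\<lambda>\<omega>. (\<Sum>j. a j * Z j \<omega>) - (\<Sum>j. A j * Z (j + l) \<omega>))"
proof -
  define b where "b k = (if k < l then a k else a k - A (k - l))" for k
  define e where "e \<omega> = (\<Sum>j. a j * Z j \<omega>) - (\<Sum>j. A j * Z (j + l) \<omega>)" for \<omega>
  define E where "E n \<omega> = (\<Sum>k<n+l. b k * Z k \<omega>)" for n \<omega>
  define F where "F n = (\<Sum>k<n+l. \<bar>b k\<bar> powr \<alpha>)" for n
  have [measurable]: "Z j \<in> borel_measurable M" for j using sas[of j] by (simp add: sas_disp_def)
  have em[measurable]: "e \<in> borel_measurable M" unfolding e_def by measurable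
  have Em[measurable]: "E n \<in> borel_measurable M" for n unfolding E_def by measurable
  have AEX: "AE \<omega> in M. summable (\<lambda>j. a j * Z j \<omega>)" by (rule sas_series_AE[OF ind sas c al sa])
  have Eeq: "E n \<omega> = (\<Sum>j<n+l. a j * Z j \<omega>) - (\<Sum>j<n. A j * Z (j + l) \<omega>)" for n \<omega>
  proof -
    have "E n \<omega> = (\<Sum>k<n+l. a k * Z k \<omega> - (if k < l then 0 else A (k - l) * Z k \<omega>))"
      unfolding E_def b_def by (intro sum.cong) (auto simp: algebra_simps)
    also have "\<dots> = (\<Sum>k<n+l. a k * Z k \<omega>) - (\<Sum>k<n+l. (if k < l then 0 else A (k - l) * Z k \<omega>))"
      by (rule sum_subtractf)
    also have "(\<Sum>k<n+l. (if k < l then 0 else A (k - l) * Z k \<omega>)) =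
        (\<Sum>k\<in>{0..<l}. (if k < l then 0 else A (k - l) * Z k \<omega>)) + (\<Sum>k\<in>{l..<n+l}. (if k < l then 0 else A (k - l) * Z k \<omega>))"
      unfolding lessThan_atLeast0 by (rule sum.atLeastLessThan_concat[symmetric]) auto
    also have "(\<Sum>k\<in>{0..<l}. (if k < l then 0 else A (k - l) * Z k \<omega>)) = 0" by simp
    also have "(\<Sum>k\<in>{l..<n+l}. (if k < l then 0 else A (k - l) * Z k \<omega>)) = (\<Sum>k\<in>{0+l..<n+l}. A (k - l) * Z k \<omega>)"
      by (intro sum.cong) auto
    also have "\<dots> = (\<Sum>j\<in>{0..<n}. A j * Z (j + l) \<omega>)" by (subst sum.shift_bounds_nat_ivl) simp
    finally show ?thesis by (simp add: lessThan_atLeast0)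
  qed
  have conv: "AE \<omega> in M. (\<lambda>n. E n \<omega>) \<longlonglongrightarrow> e \<omega>"
    using AEX AEA
  proof (eventually_elim)
    case (elim \<omega>)
    have "(\<lambda>n. \<Sum>j<n+l. a j * Z j \<omega>) \<longlonglongrightarrow> (\<Sum>j. a j * Z j \<omega>)"
      using LIMSEQ_ignore_initial_segment[OF summable_LIMSEQ[OF elim(1)], of l] by simp
    moreover have "(\<lambda>n. \<Sum>j<n. A j * Z (j + l) \<omega>) \<longlonglongrightarrow> (\<Sum>j. A j * Z (j + l) \<omega>)"
      by (rule summable_LIMSEQ[OF elim(2)])
    ultimately show ?case unfolding Eeq e_def by (rule tendsto_diff)
  qed
  have charE: "char (distr M borel (E n)) t = complex_of_real (exp (- (c * F n) * \<bar>t\<bar> powr \<alpha>))" for n t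
  proof -
    have "sas_disp M \<alpha> (c * F n) (E n)"
      unfolding E_def[abs_def] F_def by (rule sas_lincomb[OF ind sas]) simp
    then show ?thesis by (simp add: sas_disp_def)
  qed
  have charlim: "(\<lambda>n. complex_of_real (exp (- (c * F n) * \<bar>t\<bar> powr \<alpha>))) \<longlonglongrightarrow> char (distr M borel e) t" for t
  proof -
    have lim1: "(\<lambda>n. CLINT \<omega>|M. iexp (t * E n \<omega>)) \<longlonglongrightarrow> (CLINT \<omega>|M. iexp (t * e \<omega>))"
    proof (rule integral_dominated_convergence[where w="\<lambda>_. 1"])
      show "AE \<omega> in M. (\<lambda>n. iexp (t * E n \<omega>)) \<longlonglongrightarrow> iexp (t * e \<omega>)"
        using conv by eventually_elim (auto intro!: tendsto_intros)
    qed auto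
    have eqn: "complex_of_real (exp (- (c * F n) * \<bar>t\<bar> powr \<alpha>)) = (CLINT \<omega>|M. iexp (t * E n \<omega>))" for n
      using charE[of n t] char_distr_int[OF Em[of n], of t] by metis
    show ?thesis unfolding eqn char_distr_int[OF em] by (rule lim1)
  qed
  have Fmono: "F n \<le> F m" if "n \<le> m" for n m
    unfolding F_def using that by (intro sum_mono2) auto
  have rd: "real_distribution (distr M borel e)" by simp
  have summ: "summable (\<lambda>k. \<bar>b k\<bar> powr \<alpha>)"
  proof -
    interpret rd: real_distribution "distr M borel e" by (rule rd)
    have "isCont (char (distr M borel e)) 0" by (rule rd.isCont_char)
    then have "((\<lambda>t. Re (char (distr M borel e) t)) \<longlongrightarrow> Re (char (distr M borel e) 0)) (at 0)"
      by (intro tendsto_Re) (simp add: isCont_def)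
    then have "((\<lambda>t. Re (char (distr M borel e) t)) \<longlongrightarrow> 1) (at 0)" by (simp add: rd.char_zero)
    then have "eventually (\<lambda>t. Re (char (distr M borel e) t) > 1/2) (at 0)"
      by (intro order_tendstoD) auto
    then obtain d where d: "0 < d" and dP: "\<And>t. t \<noteq> 0 \<Longrightarrow> dist t 0 < d \<Longrightarrow> Re (char (distr M borel e) t) > 1/2"
      unfolding eventually_at by auto
    define t0 where "t0 = d / 2"
    have t0: "0 < t0" "Re (char (distr M borel e) t0) > 1/2" using d dP[of t0] by (auto simp: t0_def)
    have "(\<lambda>n. exp (- (c * F n) * \<bar>t0\<bar> powr \<alpha>)) \<longlonglongrightarrow> Re (char (distr M borel e) t0)"
      using tendsto_Re[OF charlim[of t0]] by simp
    then have "eventually (\<lambda>n. exp (- (c * F n) * \<bar>t0\<bar> powr \<alpha>) > 1/2) sequentially"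
      using t0 by (intro order_tendstoD) auto
    have Lle: "Re (char (distr M borel e) t0) \<le> exp (- (c * F n) * \<bar>t0\<bar> powr \<alpha>)" for n
    proof (rule LIMSEQ_le_const2[OF \<open>(\<lambda>n. exp (- (c * F n) * \<bar>t0\<bar> powr \<alpha>)) \<longlonglongrightarrow> _\<close>])
      show "\<exists>N. \<forall>m\<ge>N. exp (- (c * F m) * \<bar>t0\<bar> powr \<alpha>) \<le> exp (- (c * F n) * \<bar>t0\<bar> powr \<alpha>)"
      proof (intro exI[of _ n] allI impI)
        fix m assume "n \<le> m"
        then have "F n \<le> F m" by (rule Fmono)
        then have "c * F n * \<bar>t0\<bar> powr \<alpha> \<le> c * F m * \<bar>t0\<bar> powr \<alpha>"
          using c by (intro mult_right_mono mult_left_mono) auto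
        then show "exp (- (c * F m) * \<bar>t0\<bar> powr \<alpha>) \<le> exp (- (c * F n) * \<bar>t0\<bar> powr \<alpha>)" by simp
      qed
    qed
    define K where "K = - ln (1/2) / (c * \<bar>t0\<bar> powr \<alpha>)"
    have pos: "0 < c * \<bar>t0\<bar> powr \<alpha>" using c t0 by simp
    have bnd: "F n \<le> K" for n
    proof -
      have "exp (- (c * F n) * \<bar>t0\<bar> powr \<alpha>) > 1/2" using Lle[of n] t0 by linarith
      then have "ln (1/2) < ln (exp (- (c * F n) * \<bar>t0\<bar> powr \<alpha>))"
        by (subst ln_less_cancel_iff) auto
      then have "- (c * F n) * \<bar>t0\<bar> powr \<alpha> > ln (1/2)" by simp
      then have "- (F n * (c * \<bar>t0\<bar> powr \<alpha>)) > ln (1/2)" by (simp add: algebra_simps)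
      then have "F n * (c * \<bar>t0\<bar> powr \<alpha>) < - ln (1/2)" by linarith
      then show ?thesis unfolding K_def using pos by (simp add: field_simps)
    qed
    show ?thesis
    proof (rule bounded_imp_summable)
      fix n
      have "(\<Sum>k\<le>n. \<bar>b k\<bar> powr \<alpha>) \<le> F (Suc n)"
        unfolding F_def by (intro sum_mono2) auto
      then show "(\<Sum>k\<le>n. \<bar>b k\<bar> powr \<alpha>) \<le> K" using bnd[of "Suc n"] by linarith
    qed simp
  qed
  define S where "S = (\<Sum>k. \<bar>b k\<bar> powr \<alpha>)"
  have FS: "F \<longlonglongrightarrow> S"
    unfolding F_def[abs_def] S_def
    using LIMSEQ_ignore_initial_segment[OF summable_LIMSEQ[OF summ], of l] by simp
  have S0: "0 \<le> S" unfolding S_def using summ by (intro suminf_nonneg) auto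
  have chare: "char (distr M borel e) t = complex_of_real (exp (- (c * S) * \<bar>t\<bar> powr \<alpha>))" for t
  proof (rule LIMSEQ_unique[OF charlim])
    show "(\<lambda>n. complex_of_real (exp (- (c * F n) * \<bar>t\<bar> powr \<alpha>))) \<longlonglongrightarrow> complex_of_real (exp (- (c * S) * \<bar>t\<bar> powr \<alpha>))"
      by (intro tendsto_intros FS)
  qed
  have "sas_disp M \<alpha> (c * S) e"
    unfolding sas_disp_def using chare S0 c by simp
  then show ?thesis using summ unfolding S_def b_def e_def[abs_def] by simp
qed

end

theorem mainTheorem3:
  fixes M :: "'a measure" and \<alpha> :: real and \<epsilon> :: "int \<Rightarrow> 'a \<Rightarrow> real"
    and a :: "int \<Rightarrow> nat \<Rightarrow> real" and T :: int and h l :: nat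
  assumes "prob_space M" and "0 < \<alpha>" and "\<alpha> < 2"
    and "prob_space.indep_vars M (\<lambda>_. borel) \<epsilon> UNIV"
    and "\<And>t. sas_disp M \<alpha> ((1 / sqrt 2) powr \<alpha>) (\<epsilon> t)"
    and "\<And>t. summable (\<lambda>j. \<bar>a t j\<bar> powr min 1 \<alpha>)"
    and "1 \<le> h" and "1 \<le> l" and "l \<le> h"
  shows "let T' = T - int h - 1;
             X = (\<lambda>\<omega>. \<Sum>j. a (T' + int l) j * \<epsilon> (T' + int l - int j) \<omega>);
             e = (\<lambda>A \<omega>. X \<omega> - (\<Sum>j. A j * \<epsilon> (T' - int j) \<omega>))
         in \<exists>d0. sas_disp M \<alpha> d0 (e (\<lambda>j. a (T' + int l) (j + l))) \<and>
               (\<forall>A :: nat \<Rightarrow> real. (AE \<omega> in M. summable (\<lambda>j. A j * \<epsilon> (T' - int j) \<omega>)) \<longrightarrow>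
                   (\<exists>d. sas_disp M \<alpha> d (e A) \<and> d0 \<le> d))"
proof -
  interpret P: prob_space M by (rule assms(1))
  define T' where "T' = T - int h - 1"
  define s where "s = T' + int l"
  define c where "c = (1 / sqrt 2) powr \<alpha>"
  have c: "0 < c" by (simp add: c_def)
  define Z where "Z j = \<epsilon> (s - int j)" for j
  have indZ: "P.indep_vars (\<lambda>_. borel) Z UNIV"
    using P.indep_vars_reindex[OF assms(4), of "\<lambda>j::nat. s - int j" UNIV]
    unfolding Z_def by (simp add: inj_on_def)
  have sasZ: "sas_disp M \<alpha> c (Z j)" for j using assms(5) by (simp add: Z_def c_def)
  have sa: "summable (\<lambda>j. \<bar>a s j\<bar> powr \<alpha>)" by (rule powr_min_summable[OF assms(6) assms(2)])
  have shiftZ: "\<epsilon> (T' - int j) = Z (j + l)" for j by (simp add: Z_def s_def)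
  have Xeq: "\<epsilon> (T' + int l - int j) = Z j" for j by (simp add: Z_def s_def)
  have key: "summable (\<lambda>k. \<bar>if k < l then a s k else a s k - A (k - l)\<bar> powr \<alpha>) \<and>
     sas_disp M \<alpha> (c * (\<Sum>k. \<bar>if k < l then a s k else a s k - A (k - l)\<bar> powr \<alpha>))
        (\<lambda>\<omega>. (\<Sum>j. a s j * Z j \<omega>) - (\<Sum>j. A j * \<epsilon> (T' - int j) \<omega>))"
    if "AE \<omega> in M. summable (\<lambda>j. A j * \<epsilon> (T' - int j) \<omega>)" for A
    using P.pred_error[OF indZ sasZ c assms(2) sa, of A l] that by (simp add: shiftZ)
  have AEX: "AE \<omega> in M. summable (\<lambda>j. a s j * Z j \<omega>)" by (rule P.sas_series_AE[OF indZ sasZ c assms(2) sa])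
  define d0 where "d0 = c * (\<Sum>k<l. \<bar>a s k\<bar> powr \<alpha>)"
  have opt: "sas_disp M \<alpha> d0 (\<lambda>\<omega>. (\<Sum>j. a s j * Z j \<omega>) - (\<Sum>j. a s (j + l) * \<epsilon> (T' - int j) \<omega>))"
  proof -
    have "AE \<omega> in M. summable (\<lambda>j. a s (j + l) * \<epsilon> (T' - int j) \<omega>)"
      using AEX by eventually_elim (simp add: shiftZ summable_iff_shift[where f="\<lambda>j. a s j * Z j _"])
    from key[OF this] have k: "sas_disp M \<alpha> (c * (\<Sum>k. \<bar>if k < l then a s k else a s k - a s (k - l + l)\<bar> powr \<alpha>))
        (\<lambda>\<omega>. (\<Sum>j. a s j * Z j \<omega>) - (\<Sum>j. a s (j + l) * \<epsilon> (T' - int j) \<omega>))" by simp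
    have "(\<Sum>k. \<bar>if k < l then a s k else a s k - a s (k - l + l)\<bar> powr \<alpha>) = (\<Sum>k<l. \<bar>if k < l then a s k else a s k - a s (k - l + l)\<bar> powr \<alpha>)"
      by (rule suminf_finite) auto
    also have "\<dots> = (\<Sum>k<l. \<bar>a s k\<bar> powr \<alpha>)" by (intro sum.cong) auto
    finally show ?thesis using k by (simp add: d0_def)
  qed
  show ?thesis
    unfolding Let_def T'_def[symmetric] s_def[symmetric]
  proof (rule exI[of _ d0], intro conjI allI impI)
    show "sas_disp M \<alpha> d0 (\<lambda>\<omega>. (\<Sum>j. a s j * \<epsilon> (s - int j) \<omega>) - (\<Sum>j. a s (j + l) * \<epsilon> (T' - int j) \<omega>))"
      using opt by (simp add: Z_def)
  next
    fix A :: "nat \<Rightarrow> real"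
    assume A: "AE \<omega> in M. summable (\<lambda>j. A j * \<epsilon> (T' - int j) \<omega>)"
    note k = key[OF A, unfolded Z_def]
    show "\<exists>d. sas_disp M \<alpha> d (\<lambda>\<omega>. (\<Sum>j. a s j * \<epsilon> (s - int j) \<omega>) - (\<Sum>j. A j * \<epsilon> (T' - int j) \<omega>)) \<and> d0 \<le> d"
    proof (intro exI conjI)
      show "sas_disp M \<alpha> (c * (\<Sum>k. \<bar>if k < l then a s k else a s k - A (k - l)\<bar> powr \<alpha>))
        (\<lambda>\<omega>. (\<Sum>j. a s j * \<epsilon> (s - int j) \<omega>) - (\<Sum>j. A j * \<epsilon> (T' - int j) \<omega>))" using k by simp
      have "(\<Sum>k<l. \<bar>a s k\<bar> powr \<alpha>) = (\<Sum>k<l. \<bar>if k < l then a s k else a s k - A (k - l)\<bar> powr \<alpha>)"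
        by (intro sum.cong) auto
      also have "\<dots> \<le> (\<Sum>k. \<bar>if k < l then a s k else a s k - A (k - l)\<bar> powr \<alpha>)"
        using k by (intro sum_le_suminf) auto
      finally show "d0 \<le> c * (\<Sum>k. \<bar>if k < l then a s k else a s k - A (k - l)\<bar> powr \<alpha>)"
        unfolding d0_def using c by (intro mult_left_mono) auto
    qed
  qed
qed

end
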